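(* Splitting forcing $\mathbb{SP}$ is weighted: for every $T\in\mathbb{SP}$ there is a weight $\rho$ on $T$ such that every tree $S$ with $S\le_\rho T$ belongs to $\mathbb{SP}$.
   Context: $S\subseteq 2^{<\omega}$ is fat if there is $m\in\omega$ such that for every $n\ge m$ there are $s,t\in S$ with $s(n)=0,t(n)=1$. For a tree $T\subseteq 2^{<\omega}$ and $s\in T$, $T_s=\{t\in T:t\subseteq s\text{ or }s\subseteq t\}$. $T$ is a splitting tree if $T_s$ is fat for every $s\in T$; $\mathbb{SP}$ is the set of splitting trees ordered by inclusion. A weight on a perfect tree $T$ is a map $\rho:T\times T\to[T]^{<\omega}$ with $\rho(s,t)\subseteq T_s\setminus T_t$ for all $s,t\in T$. For a tree $S$, $S\le_\rho T$ means $S\subseteq T$ and the set of $s_0\in S$ for which there is an injective sequence $(s_n)_{n\in\omega}$ in $S_{s_0}$ (starting at $s_0$) with $\rho(s_n,s_{n+1})\subseteq S$ for all $n$ is dense in $S$ (every node of $S$ has an extension in this set). *)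

theory Defs
  imports Main "HOL-Library.Sublist"
begin

text \<open>Elements of 2^{<omega} are finite binary sequences, represented as bool lists
  (False = 0, True = 1); s(n) is s ! n for n < length s; t extends s iff prefix s t.\<close>

definition is_tree :: "bool list set \<Rightarrow> bool" where
  "is_tree T \<longleftrightarrow> T \<noteq> {} \<and> (\<forall>t\<in>T. \<forall>s. prefix s t \<longrightarrow> s \<in> T)"

definition fat :: "bool list set \<Rightarrow> bool" where
  "fat S \<longleftrightarrow> (\<exists>m::nat. \<forall>n\<ge>m. \<exists>s\<in>S. \<exists>t\<in>S.
      n < length s \<and> s ! n = False \<and> n < length t \<and> t ! n = True)"

definition subtree_at :: "bool list set \<Rightarrow> bool list \<Rightarrow> bool list set" where
  "subtree_at T s = {t \<in> T. prefix t s \<or> prefix s t}"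

definition splitting_tree :: "bool list set \<Rightarrow> bool" where
  "splitting_tree T \<longleftrightarrow> is_tree T \<and> (\<forall>s\<in>T. fat (subtree_at T s))"

definition SP :: "bool list set set" where
  "SP = {T. splitting_tree T}"

definition perfect_tree :: "bool list set \<Rightarrow> bool" where
  "perfect_tree T \<longleftrightarrow> is_tree T \<and>
     (\<forall>s\<in>T. \<exists>t\<in>T. \<exists>u\<in>T. prefix s t \<and> prefix s u \<and> \<not> prefix t u \<and> \<not> prefix u t)"

definition is_weight :: "bool list set \<Rightarrow> (bool list \<Rightarrow> bool list \<Rightarrow> bool list set) \<Rightarrow> bool" where
  "is_weight T \<rho> \<longleftrightarrow> perfect_tree T \<and>
     (\<forall>s\<in>T. \<forall>t\<in>T. finite (\<rho> s t) \<and> \<rho> s t \<subseteq> subtree_at T s - subtree_at T t)"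

definition weight_le :: "bool list set \<Rightarrow> (bool list \<Rightarrow> bool list \<Rightarrow> bool list set) \<Rightarrow> bool list set \<Rightarrow> bool" where
  "weight_le S \<rho> T \<longleftrightarrow> S \<subseteq> T \<and>
     (let D = {s0 \<in> S. \<exists>f :: nat \<Rightarrow> bool list. inj f \<and> f 0 = s0 \<and>
                 (\<forall>n. f n \<in> subtree_at S s0) \<and> (\<forall>n. \<rho> (f n) (f (Suc n)) \<subseteq> S)}
      in \<forall>s\<in>S. \<exists>t\<in>D. prefix s t)"

end

theory Submission
  imports Defs
begin

definition spl :: "bool list set \<Rightarrow> nat \<Rightarrow> bool" where
  "spl X n \<longleftrightarrow> (\<exists>s\<in>X. \<exists>t\<in>X. n < length s \<and> s ! n = False \<and> n < length t \<and> t ! n = True)"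

lemma fat_spl: "fat X \<longleftrightarrow> (\<exists>m. \<forall>n\<ge>m. spl X n)"
  unfolding fat_def spl_def by simp

lemma prefix_nth_eq: "prefix xs ys \<Longrightarrow> n < length xs \<Longrightarrow> ys ! n = xs ! n"
  by (auto simp: prefix_def nth_append)

lemma spl_val: "spl X k \<Longrightarrow> \<exists>s\<in>X. k < length s \<and> s ! k = c"
  unfolding spl_def by (cases c) auto

definition Mw :: "bool list set \<Rightarrow> bool list \<Rightarrow> nat" where
  "Mw T b = (SOME m. \<forall>n\<ge>m. spl (subtree_at T b) n)"

definition PP :: "bool list set \<Rightarrow> bool list \<Rightarrow> bool list \<Rightarrow> nat \<Rightarrow> bool \<Rightarrow> bool list \<Rightarrow> bool list \<Rightarrow> bool" where
  "PP T a b k c u w \<longleftrightarrow> w \<in> subtree_at T a - subtree_at T b \<and> prefix u w \<and> k < length w \<and> w ! k = c"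

definition rho :: "bool list set \<Rightarrow> bool list \<Rightarrow> bool list \<Rightarrow> bool list set" where
  "rho T a b = {SOME w. PP T a b k c u w | k c u. k < Mw T b \<and> prefix u b \<and> (\<exists>w. PP T a b k c u w)}"

lemma rho_finite: "finite (rho T a b)"
proof -
  have "rho T a b \<subseteq> (\<lambda>(k,c,u). SOME w. PP T a b k c u w) ` ({..<Mw T b} \<times> UNIV \<times> set (prefixes b))"
  proof
    fix x assume "x \<in> rho T a b"
    then obtain k c u where "x = (SOME w. PP T a b k c u w)" "k < Mw T b" "prefix u b"
      unfolding rho_def by auto
    then show "x \<in> (\<lambda>(k,c,u). SOME w. PP T a b k c u w) ` ({..<Mw T b} \<times> UNIV \<times> set (prefixes b))"
      by (intro image_eqI[where x="(k,c,u)"]) auto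
  qed
  moreover have "finite ({..<Mw T b} \<times> (UNIV::bool set) \<times> set (prefixes b))" by simp
  ultimately show ?thesis by (meson finite_imageI finite_subset)
qed

lemma rho_sub: "rho T a b \<subseteq> subtree_at T a - subtree_at T b"
proof
  fix x assume "x \<in> rho T a b"
  then obtain k c u where "x = (SOME w. PP T a b k c u w)" "\<exists>w. PP T a b k c u w"
    unfolding rho_def by auto
  then have "PP T a b k c u x" by (metis someI_ex)
  then show "x \<in> subtree_at T a - subtree_at T b" unfolding PP_def by auto
qed

lemma Mw_spec:
  assumes "splitting_tree T" "b \<in> T" "\<not> spl (subtree_at T b) k"
  shows "k < Mw T b"
proof -
  have "fat (subtree_at T b)" using assms unfolding splitting_tree_def by auto
  then have "\<exists>m. \<forall>n\<ge>m. spl (subtree_at T b) n" by (simp add: fat_spl)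
  then have "\<forall>n\<ge>Mw T b. spl (subtree_at T b) n" unfolding Mw_def by (rule someI_ex)
  with assms(3) show ?thesis by (meson not_less)
qed

lemma splitting_perfect:
  assumes "splitting_tree T" shows "perfect_tree T"
  unfolding perfect_tree_def
proof (intro conjI ballI)
  show "is_tree T" using assms unfolding splitting_tree_def by auto
  fix s assume s: "s \<in> T"
  have "fat (subtree_at T s)" using assms s unfolding splitting_tree_def by auto
  then obtain m where m: "\<forall>n\<ge>m. spl (subtree_at T s) n" by (auto simp: fat_spl)
  define n where "n = max m (length s)"
  have "spl (subtree_at T s) n" using m n_def by auto
  then obtain v w where v: "v \<in> subtree_at T s" "n < length v" "v ! n = False"
    and w: "w \<in> subtree_at T s" "n < length w" "w ! n = True"
    unfolding spl_def by blast
  have pv: "prefix s v" using v n_def unfolding subtree_at_def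
    by (auto dest: prefix_length_le)
  have pw: "prefix s w" using w n_def unfolding subtree_at_def
    by (auto dest: prefix_length_le)
  have "\<not> prefix v w" using v w prefix_nth_eq by fastforce
  moreover have "\<not> prefix w v" using v w prefix_nth_eq by fastforce
  ultimately show "\<exists>t\<in>T. \<exists>u\<in>T. prefix s t \<and> prefix s u \<and> \<not> prefix t u \<and> \<not> prefix u t"
    using v w pv pw unfolding subtree_at_def by blast
qed

lemma V_chain:
  assumes "V 0" "\<forall>j<n. V j \<longrightarrow> V (Suc j)" shows "V n"
  using assms by (induction n) auto

lemma main:
  assumes T: "splitting_tree T" and S: "S \<subseteq> T" and tS: "t \<in> S"
    and f: "inj f" "f 0 = t" "\<forall>n. f n \<in> subtree_at S t" "\<forall>n. rho T (f n) (f (Suc n)) \<subseteq> S"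
  shows "fat (subtree_at S t)"
proof -
  have tT: "t \<in> T" using S tS by auto
  have "fat (subtree_at T t)" using T tT unfolding splitting_tree_def by auto
  then obtain m0 where m0: "\<forall>n\<ge>m0. spl (subtree_at T t) n" by (auto simp: fat_spl)
  have "\<forall>k\<ge>max m0 (length t). spl (subtree_at S t) k"
  proof (intro allI impI)
    fix k assume k: "max m0 (length t) \<le> k"
    define V where "V = (\<lambda>j c. \<exists>w\<in>T. prefix t w \<and> (prefix w (f j) \<or> prefix (f j) w) \<and> k < length w \<and> w ! k = c)"
    have "\<exists>n. k < length (f n)"
    proof (rule ccontr)
      assume "\<not> ?thesis"
      then have "range f \<subseteq> {xs. set xs \<subseteq> (UNIV::bool set) \<and> length xs \<le> k}" by (auto simp: not_less)
      moreover have "finite {xs. set xs \<subseteq> (UNIV::bool set) \<and> length xs \<le> k}"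
        by (rule finite_lists_length_le) simp
      ultimately have "finite (range f)" by (rule finite_subset)
      then show False using f(1) by (simp add: finite_image_iff)
    qed
    then obtain n where n: "k < length (f n)" by blast
    have claim: "\<exists>w\<in>subtree_at S t. k < length w \<and> w ! k = c" for c
    proof -
      have "spl (subtree_at T t) k" using m0 k by auto
      then obtain s where s: "s \<in> subtree_at T t" "k < length s" "s ! k = c"
        using spl_val by blast
      have "prefix t s" using s k unfolding subtree_at_def by (auto dest: prefix_length_le)
      then have V0: "V 0 c" unfolding V_def using s f(2) unfolding subtree_at_def by auto
      show ?thesis
      proof (cases "\<forall>j<n. V j c \<longrightarrow> V (Suc j) c")
        case True
        then have "V n c" using V_chain[of "\<lambda>j. V j c"] V0 by blast
        then obtain w where w: "prefix w (f n) \<or> prefix (f n) w" "k < length w" "w ! k = c"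
          unfolding V_def by blast
        have "f n ! k = c" using w n prefix_nth_eq by metis
        then show ?thesis using f(3) n by blast
      next
        case False
        then obtain j where j: "V j c" "\<not> V (Suc j) c" by blast
        define a where "a = f j"
        define b where "b = f (Suc j)"
        obtain w where w: "w \<in> T" "prefix t w" "prefix w a \<or> prefix a w" "k < length w" "w ! k = c"
          using j(1) unfolding V_def a_def by blast
        have bS: "b \<in> subtree_at S t" using f(3) b_def by auto
        then have bT: "b \<in> T" using S unfolding subtree_at_def by auto
        have tb: "prefix t b"
        proof (rule ccontr)
          assume "\<not> prefix t b"
          then have "prefix b t" using bS unfolding subtree_at_def by auto
          then have "prefix b w" using w(2) by auto
          then have "V (Suc j) c" unfolding V_def b_def[symmetric] using w by blast
          then show False using j(2) by simp
        qed
        have nspl: "\<not> spl (subtree_at T b) k"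
        proof
          assume "spl (subtree_at T b) k"
          then obtain v where v: "v \<in> subtree_at T b" "k < length v" "v ! k = c"
            using spl_val by blast
          have "prefix t v"
          proof (cases "prefix b v")
            case True then show ?thesis using tb by auto
          next
            case False
            then have "prefix v b" using v unfolding subtree_at_def by auto
            then have "prefix t v \<or> prefix v t" using tb prefix_same_cases by blast
            moreover have "\<not> prefix v t"
            proof
              assume "prefix v t"
              then have "length v \<le> length t" by (rule prefix_length_le)
              then show False using v(2) k by simp
            qed
            ultimately show ?thesis by blast
          qed
          then have "V (Suc j) c" unfolding V_def b_def[symmetric] using v unfolding subtree_at_def by auto
          then show False using j(2) by simp
        qed
        have kM: "k < Mw T b" using Mw_spec[OF T bT nspl] .
        have wnb: "w \<notin> subtree_at T b"
        proof
          assume "w \<in> subtree_at T b"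
          then have "V (Suc j) c" unfolding V_def b_def[symmetric] subtree_at_def using w by auto
          then show False using j(2) by simp
        qed
        have Pw: "PP T a b k c t w" unfolding PP_def using w wnb by (auto simp: subtree_at_def)
        define w' where "w' = (SOME w. PP T a b k c t w)"
        have "w' \<in> rho T a b" unfolding rho_def w'_def using kM tb Pw by blast
        then have w'S: "w' \<in> S" using f(4) a_def b_def by auto
        have "PP T a b k c t w'" unfolding w'_def using Pw by (metis someI_ex)
        then have "prefix t w'" "k < length w'" "w' ! k = c" unfolding PP_def by auto
        then show ?thesis using w'S unfolding subtree_at_def by blast
      qed
    qed
    obtain w1 where "w1 \<in> subtree_at S t" "k < length w1" "w1 ! k = False" using claim by blast
    moreover obtain w2 where "w2 \<in> subtree_at S t" "k < length w2" "w2 ! k = True" using claim by blast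
    ultimately show "spl (subtree_at S t) k" unfolding spl_def by blast
  qed
  then show ?thesis unfolding fat_spl by blast
qed

lemma fat_mono: "fat X \<Longrightarrow> X \<subseteq> Y \<Longrightarrow> fat Y"
  unfolding fat_def by (meson subsetD)

theorem lemma4p10:
  shows "\<forall>T\<in>SP. \<exists>\<rho>. is_weight T \<rho> \<and> (\<forall>S. is_tree S \<and> weight_le S \<rho> T \<longrightarrow> S \<in> SP)"
proof
  fix T assume "T \<in> SP"
  then have T: "splitting_tree T" unfolding SP_def by auto
  have "is_weight T (rho T)"
    unfolding is_weight_def using splitting_perfect[OF T] rho_finite rho_sub by blast
  moreover have "S \<in> SP" if S: "is_tree S" "weight_le S (rho T) T" for S
  proof -
    have ST: "S \<subseteq> T" using S(2) unfolding weight_le_def by auto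
    have "fat (subtree_at S s)" if s: "s \<in> S" for s
    proof -
      obtain t f where t: "t \<in> S" "prefix s t" "inj f" "f 0 = t" "\<forall>n. f n \<in> subtree_at S t"
        "\<forall>n. rho T (f n) (f (Suc n)) \<subseteq> S"
        using S(2) s unfolding weight_le_def Let_def by blast
      have "fat (subtree_at S t)" using main[OF T ST t(1) t(3-6)] .
      moreover have "subtree_at S t \<subseteq> subtree_at S s"
        unfolding subtree_at_def using t(2) prefix_same_cases by fastforce
      ultimately show ?thesis by (rule fat_mono)
    qed
    then show ?thesis using S(1) unfolding SP_def splitting_tree_def by auto
  qed
  ultimately show "\<exists>\<rho>. is_weight T \<rho> \<and> (\<forall>S. is_tree S \<and> weight_le S \<rho> T \<longrightarrow> S \<in> SP)" by blast
qed

end
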